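(* In the curved-exam game described in the context, fix a student $i$, an opponent profile $x_{-i}\in[0,1]^{n-1}$, an effort $x_i\in[0,1)$ and $\Delta x_i>0$ with $x_i+\Delta x_i<1$. Regard the difference $$\Delta\log U_i:=\log U_i(x_i+\Delta x_i,x_{-i};\alpha,m)-\log U_i(x_i,x_{-i};\alpha,m)$$ as a function of the parameters $(\alpha,m)=(\alpha_1,\dots,\alpha_n,m)\in(0,1)^{n+1}$. Then $\Delta\log U_i$ is non-increasing in the target mean $m$ and non-decreasing in each ability parameter $\alpha_j$, $j=1,\dots,n$ (wherever it is defined).
   Context: The curved-exam game: fix $n\ge2$, abilities $\alpha=(\alpha_1,\dots,\alpha_n)\in(0,1)^n$, target mean $m\in(0,1)$. Student $i$ chooses $x_i\in[0,1]$; $\bar x=\frac1n\sum_j x_j$, $\bar x_{-i}=\frac1{n-1}\sum_{j\neq i}x_j$. Grade $G_i(x;m)=x_i+\max(m-\bar x,0)$ (not truncated at 1); payoff $U_i(x;\alpha,m)=G_i(x;m)^{\alpha_i}(1-x_i)^{1-\alpha_i}$, with $\log 0=-\infty$. *)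

theory Defs
  imports Complex_Main
begin

text \<open>Profiles and abilities are functions on indices; only indices j < n matter.\<close>

definition xbar :: "nat \<Rightarrow> (nat \<Rightarrow> real) \<Rightarrow> real" where
  "xbar n x = (\<Sum>j<n. x j) / real n"

definition grade :: "nat \<Rightarrow> real \<Rightarrow> (nat \<Rightarrow> real) \<Rightarrow> nat \<Rightarrow> real" where
  "grade n m x i = x i + max (m - xbar n x) 0"

definition payoff :: "nat \<Rightarrow> (nat \<Rightarrow> real) \<Rightarrow> real \<Rightarrow> (nat \<Rightarrow> real) \<Rightarrow> nat \<Rightarrow> real" where
  "payoff n alpha m x i = grade n m x i powr alpha i * (1 - x i) powr (1 - alpha i)"

text \<open>Delta log U_i for an increase of x_i by d, as a function of (alpha, m).
  It is (finitely) defined exactly when both payoffs are positive.\<close>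

definition dlogU :: "nat \<Rightarrow> (nat \<Rightarrow> real) \<Rightarrow> real \<Rightarrow> (nat \<Rightarrow> real) \<Rightarrow> nat \<Rightarrow> real \<Rightarrow> real" where
  "dlogU n alpha m x i d = ln (payoff n alpha m (x(i := x i + d)) i) - ln (payoff n alpha m x i)"

definition dlogU_defined :: "nat \<Rightarrow> (nat \<Rightarrow> real) \<Rightarrow> real \<Rightarrow> (nat \<Rightarrow> real) \<Rightarrow> nat \<Rightarrow> real \<Rightarrow> bool" where
  "dlogU_defined n alpha m x i d \<longleftrightarrow>
     payoff n alpha m (x(i := x i + d)) i > 0 \<and> payoff n alpha m x i > 0"

end

theory Submission
  imports Defs
begin

lemma xbar_upd:
  assumes "i < n"
  shows "xbar n (x(i := x i + d)) = xbar n x + d / real n"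
proof -
  have "(\<Sum>j<n. (x(i := x i + d)) j) = (\<Sum>j<n. x j + (if j = i then d else 0))"
    by (rule sum.cong) auto
  also have "\<dots> = (\<Sum>j<n. x j) + d" using assms by (simp add: sum.distrib)
  finally show ?thesis unfolding xbar_def by (simp add: add_divide_distrib)
qed

lemma ln_pay:
  fixes G y a :: real
  assumes "G > 0" "y < 1"
  shows "ln (G powr a * (1 - y) powr (1 - a)) = a * ln G + (1 - a) * ln (1 - y)"
proof -
  have "G powr a > 0" using assms(1) by (simp add: powr_def)
  moreover have "(1 - y) powr (1 - a) > 0" using assms(2) by (simp add: powr_def)
  ultimately have "ln (G powr a * (1 - y) powr (1 - a)) = ln (G powr a) + ln ((1 - y) powr (1 - a))"
    by (simp add: ln_mult)
  then show ?thesis using assms by (simp add: ln_powr)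
qed

lemma grade_pos:
  assumes "payoff n alpha m x i > 0" "x i \<ge> 0"
  shows "grade n m x i > 0"
proof -
  have "grade n m x i \<ge> 0" using assms(2) unfolding grade_def by simp
  moreover have "grade n m x i \<noteq> 0"
  proof
    assume "grade n m x i = 0"
    then show False using assms(1) unfolding payoff_def by simp
  qed
  ultimately show ?thesis by simp
qed

lemma dlog_formula:
  assumes i: "i < n" and xi: "0 \<le> x i" "x i < 1" and d: "d > 0" "x i + d < 1"
    and def: "dlogU_defined n alpha m x i d"
  shows "dlogU n alpha m x i d =
     alpha i * (ln (x i + d + max (m - xbar n x - d / real n) 0) - ln (x i + max (m - xbar n x) 0))
     + (1 - alpha i) * (ln (1 - (x i + d)) - ln (1 - x i))"
    and "x i + max (m - xbar n x) 0 > 0"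
proof -
  let ?x' = "x(i := x i + d)"
  have g1: "grade n m x i > 0" using grade_pos def xi unfolding dlogU_defined_def by blast
  then show "x i + max (m - xbar n x) 0 > 0" unfolding grade_def .
  have g2: "grade n m ?x' i = x i + d + max (m - xbar n x - d / real n) 0"
    unfolding grade_def using xbar_upd[OF i] by (simp add: algebra_simps)
  have g2p: "grade n m ?x' i > 0" using g2 xi d
    by (smt (verit) max.cobounded2)
  have "ln (payoff n alpha m ?x' i) = alpha i * ln (grade n m ?x' i) + (1 - alpha i) * ln (1 - (x i + d))"
    unfolding payoff_def using ln_pay[OF g2p, of "?x' i"] d by simp
  moreover have "ln (payoff n alpha m x i) = alpha i * ln (grade n m x i) + (1 - alpha i) * ln (1 - x i)"
    unfolding payoff_def using ln_pay[OF g1, of "x i"] xi by simp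
  ultimately show "dlogU n alpha m x i d =
     alpha i * (ln (x i + d + max (m - xbar n x - d / real n) 0) - ln (x i + max (m - xbar n x) 0))
     + (1 - alpha i) * (ln (1 - (x i + d)) - ln (1 - x i))"
    unfolding dlogU_def using g2 by (simp add: grade_def algebra_simps)
qed

lemma key_m:
  fixes a b c d m1 m2 :: real
  assumes "a \<ge> 0" "0 < c" "c < d" "m1 \<le> m2" "a + max (m1 - b) 0 > 0"
  shows "ln (a + d + max (m2 - b - c) 0) - ln (a + max (m2 - b) 0)
       \<le> ln (a + d + max (m1 - b - c) 0) - ln (a + max (m1 - b) 0)"
proof -
  define u1 where "u1 = max (m1 - b) 0"
  define u2 where "u2 = max (m2 - b) 0"
  define v1 where "v1 = max (m1 - b - c) 0"
  define v2 where "v2 = max (m2 - b - c) 0"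
  have h1: "v2 - v1 \<le> u2 - u1" "0 \<le> v2 - v1" "u1 - v1 \<le> c" "u1 \<le> u2" "v1 \<ge> 0" "u1 \<ge> 0"
    using assms unfolding u1_def u2_def v1_def v2_def by auto
  define A where "A = a + u1"
  define B where "B = a + d + v1"
  have AB: "0 < A" "A \<le> B" using h1 assms unfolding A_def B_def u1_def by auto
  have "(v2 - v1) * A \<le> (u2 - u1) * A" using h1 AB by (intro mult_right_mono) auto
  also have "\<dots> \<le> (u2 - u1) * B" using h1 AB by (intro mult_left_mono) auto
  finally have key: "(a + d + v2) * (a + u1) \<le> (a + d + v1) * (a + u2)"
    unfolding A_def B_def by (simp add: algebra_simps)
  have p: "a + u1 > 0" "a + u2 > 0" "a + d + v1 > 0" "a + d + v2 > 0"
    using h1 AB assms unfolding A_def by auto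
  have "ln ((a + d + v2) * (a + u1)) \<le> ln ((a + d + v1) * (a + u2))"
    using key p by simp
  then have "ln (a + d + v2) + ln (a + u1) \<le> ln (a + d + v1) + ln (a + u2)"
    using p by (simp add: ln_mult)
  then show ?thesis unfolding u1_def u2_def v1_def v2_def by linarith
qed

theorem mainTheorem3:
  fixes n i :: nat and x :: "nat \<Rightarrow> real" and d :: real
  assumes n2: "n \<ge> 2" and i: "i < n"
    and opp: "\<forall>j<n. j \<noteq> i \<longrightarrow> 0 \<le> x j \<and> x j \<le> 1"
    and xi: "0 \<le> x i" "x i < 1"
    and d: "d > 0" "x i + d < 1"
  shows
    "(\<forall>alpha m1 m2. (\<forall>j<n. 0 < alpha j \<and> alpha j < 1) \<and> 0 < m1 \<and> m1 \<le> m2 \<and> m2 < 1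
        \<and> dlogU_defined n alpha m1 x i d \<and> dlogU_defined n alpha m2 x i d
        \<longrightarrow> dlogU n alpha m2 x i d \<le> dlogU n alpha m1 x i d)
   \<and> (\<forall>alpha alpha' m j. j < n \<and> (\<forall>k<n. 0 < alpha k \<and> alpha k < 1)
        \<and> (\<forall>k<n. 0 < alpha' k \<and> alpha' k < 1)
        \<and> (\<forall>k<n. k \<noteq> j \<longrightarrow> alpha' k = alpha k) \<and> alpha j \<le> alpha' j
        \<and> 0 < m \<and> m < 1
        \<and> dlogU_defined n alpha m x i d \<and> dlogU_defined n alpha' m x i d
        \<longrightarrow> dlogU n alpha m x i d \<le> dlogU n alpha' m x i d)"
proof (intro conjI allI impI)
  have c: "0 < d / real n" "d / real n < d" using n2 d
    by (auto simp: divide_less_eq)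
  fix alpha :: "nat \<Rightarrow> real" and m1 m2 :: real
  assume H: "(\<forall>j<n. 0 < alpha j \<and> alpha j < 1) \<and> 0 < m1 \<and> m1 \<le> m2 \<and> m2 < 1
        \<and> dlogU_defined n alpha m1 x i d \<and> dlogU_defined n alpha m2 x i d"
  note F1 = dlog_formula[of i n x d alpha m1, OF i xi d] and F2 = dlog_formula[of i n x d alpha m2, OF i xi d]
  have K: "ln (x i + d + max (m2 - xbar n x - d / real n) 0) - ln (x i + max (m2 - xbar n x) 0)
       \<le> ln (x i + d + max (m1 - xbar n x - d / real n) 0) - ln (x i + max (m1 - xbar n x) 0)"
    using key_m[OF xi(1) c, of m1 m2 "xbar n x"] H F1(2) by simp
  have ai: "alpha i > 0" using H i by auto
  show "dlogU n alpha m2 x i d \<le> dlogU n alpha m1 x i d"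
    using F1(1) F2(1) H mult_left_mono[OF K less_imp_le[OF ai]] by simp
next
  fix alpha alpha' :: "nat \<Rightarrow> real" and m :: real and j :: nat
  assume H: "j < n \<and> (\<forall>k<n. 0 < alpha k \<and> alpha k < 1)
        \<and> (\<forall>k<n. 0 < alpha' k \<and> alpha' k < 1)
        \<and> (\<forall>k<n. k \<noteq> j \<longrightarrow> alpha' k = alpha k) \<and> alpha j \<le> alpha' j
        \<and> 0 < m \<and> m < 1
        \<and> dlogU_defined n alpha m x i d \<and> dlogU_defined n alpha' m x i d"
  note F1 = dlog_formula[of i n x d alpha m, OF i xi d] and F2 = dlog_formula[of i n x d alpha' m, OF i xi d]
  have le: "alpha i \<le> alpha' i" using H i by (cases "j = i") auto
  define L1 where "L1 = ln (x i + d + max (m - xbar n x - d / real n) 0) - ln (x i + max (m - xbar n x) 0)"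
  define L2 where "L2 = ln (1 - (x i + d)) - ln (1 - x i)"
  have c: "0 < d / real n" "d / real n < d" using n2 d
    by (auto simp: divide_less_eq)
  have "x i + max (m - xbar n x) 0 \<le> x i + d + max (m - xbar n x - d / real n) 0"
    using c by auto
  moreover have "x i + max (m - xbar n x) 0 > 0" using F1(2) H by blast
  ultimately have L1: "L1 \<ge> 0" unfolding L1_def
    by (smt (verit) ln_le_cancel_iff)
  have L2: "L2 \<le> 0" unfolding L2_def using xi d by simp
  have "alpha i * (L1 - L2) \<le> alpha' i * (L1 - L2)"
    using le L1 L2 by (intro mult_right_mono) auto
  then show "dlogU n alpha m x i d \<le> dlogU n alpha' m x i d"
    using F1(1) F2(1) H unfolding L1_def[symmetric] L2_def[symmetric]
    by (simp add: algebra_simps)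
qed

end
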